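(* Assume Assumption A holds. Let $\pi$ be any state-independent dispatch policy. Then the long-run fraction of dropped demand under $\pi$ in the $K$-th system satisfies $P^{K,\pi}=\Omega(1/K^2)$ as $K\to\infty$. In particular, $\gamma_{\mathrm o}(\pi)=-\liminf_{K\to\infty}\frac1K\log P^{K,\pi}=0$.
   Context: Model. $V_S=\{1,\dots,n\}$ (supply locations), $V_D$ (demand locations), and a bipartite compatibility graph $G=(V_S\cup V_D,E)$ with $\partial(j')=\{i\in V_S:(i,j')\in E\}$. The arrival matrix $\phi=(\phi_{j'k})_{j'\in V_D,k\in V_S}$ is nonnegative with entries summing to $1$. The $K$-th system has $K$ supply units. In each slot $t=1,2,\dots$ one customer arrives, with origin/destination $(o[t],d[t])=(j',k)$ with probability $\phi_{j'k}$, i.i.d. over slots. The state $\mathbf X^K[t]\in\{x\in\mathbb Z_{\ge0}^n:\sum_ix_i=K\}$ counts the units at each location. If a customer is served from $i$, then one unit moves from $i$ to $d[t]$; otherwise the customer is dropped and the state is unchanged. State-independent policy: $\pi$ assigns to each $j'\in V_D$, $k\in V_S$ and $t\in\mathbb N$ a probability distribution $u_{j'k}[t]$ on $\partial(j')\cup\{\emptyset\}$. A customer of type $(j',k)$ arriving at time $t$ is served from $i$ drawn from $u_{j'k}[t]$, independently of the state and the history. If $i=\emptyset$, or if location $i$ currently has no supply, the customer is dropped. $P^{K,\pi}$ denotes the long-run average fraction of customers dropped, minimized over initial states (the optimistic measure). Its exponent is $\gamma_{\mathrm o}(\pi)=-\liminf_K\frac1K\log P^{K,\pi}$. Assumption A: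 there exist $j'\in V_D$ and $k\notin\partial(j')$ with $\phi_{j'k}>0$. *)

theory Defs
  imports "HOL-Probability.Probability" "HOL-Library.Landau_Symbols"
begin

text \<open>Supply locations are the elements of a finite type 's (V_S = UNIV),
demand locations the elements of a finite type 'd (V_D = UNIV).
The arrival matrix phi is a pmf on 'd \<times> 's: phi_{j'k} = pmf phi (j', k).
A dispatch decision is an 's option: None stands for the empty choice.\<close>

definition nbhd :: "('s \<times> 'd) set \<Rightarrow> 'd \<Rightarrow> 's set" where
  "nbhd E j' = {i. (i, j') \<in> E}"

definition states :: "nat \<Rightarrow> ('s::finite \<Rightarrow> nat) set" where
  "states K = {x. (\<Sum>i\<in>UNIV. x i) = K}"

definition state_indep_policy ::
  "('s \<times> 'd) set \<Rightarrow> ('d \<Rightarrow> 's \<Rightarrow> nat \<Rightarrow> 's option pmf) \<Rightarrow> bool" where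
  "state_indep_policy E u \<longleftrightarrow>
     (\<forall>j' k t. set_pmf (u j' k t) \<subseteq> insert None (Some ` nbhd E j'))"

text \<open>Joint distribution of (origin, destination, chosen location) at slot t.\<close>
definition slot_pmf ::
  "('d \<times> 's) pmf \<Rightarrow> ('d \<Rightarrow> 's \<Rightarrow> nat \<Rightarrow> 's option pmf) \<Rightarrow> nat \<Rightarrow> ('d \<times> 's \<times> 's option) pmf" where
  "slot_pmf phi u t = bind_pmf phi (\<lambda>(j', k). map_pmf (\<lambda>i. (j', k, i)) (u j' k t))"

definition dropped :: "('s \<Rightarrow> nat) \<Rightarrow> ('d \<times> 's \<times> 's option) \<Rightarrow> bool" where
  "dropped x c = (case snd (snd c) of None \<Rightarrow> True | Some i \<Rightarrow> x i = 0)"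

definition next_state :: "('s \<Rightarrow> nat) \<Rightarrow> ('d \<times> 's \<times> 's option) \<Rightarrow> ('s \<Rightarrow> nat)" where
  "next_state x c = (if dropped x c then x else
     (case c of (j', k, Some i) \<Rightarrow>
        (\<lambda>l. x l - (if l = i then 1 else 0) + (if l = k then 1 else 0))
      | _ \<Rightarrow> x))"

text \<open>state_dist phi u x0 m is the distribution of the state X[m+1] at the beginning
 of slot m+1, given X[1] = x0.\<close>
primrec state_dist ::
  "('d \<times> 's) pmf \<Rightarrow> ('d \<Rightarrow> 's \<Rightarrow> nat \<Rightarrow> 's option pmf) \<Rightarrow> ('s \<Rightarrow> nat) \<Rightarrow> nat \<Rightarrow> ('s \<Rightarrow> nat) pmf" where
  "state_dist phi u x0 0 = return_pmf x0"
| "state_dist phi u x0 (Suc m) =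
     bind_pmf (state_dist phi u x0 m)
       (\<lambda>x. map_pmf (next_state x) (slot_pmf phi u (Suc m)))"

text \<open>Probability that the customer arriving in slot t (t \<ge> 1) is dropped.\<close>
definition drop_prob ::
  "('d \<times> 's) pmf \<Rightarrow> ('d \<Rightarrow> 's \<Rightarrow> nat \<Rightarrow> 's option pmf) \<Rightarrow> ('s \<Rightarrow> nat) \<Rightarrow> nat \<Rightarrow> real" where
  "drop_prob phi u x0 t =
     measure_pmf.prob
       (bind_pmf (state_dist phi u x0 (t - 1))
          (\<lambda>x. map_pmf (dropped x) (slot_pmf phi u t))) {True}"

definition long_run_drop ::
  "('d \<times> 's) pmf \<Rightarrow> ('d \<Rightarrow> 's \<Rightarrow> nat \<Rightarrow> 's option pmf) \<Rightarrow> ('s \<Rightarrow> nat) \<Rightarrow> ereal" where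
  "long_run_drop phi u x0 =
     Liminf sequentially (\<lambda>T. ereal ((\<Sum>t=1..T. drop_prob phi u x0 t) / real T))"

definition P_drop ::
  "('d \<times> 's::finite) pmf \<Rightarrow> ('d \<Rightarrow> 's \<Rightarrow> nat \<Rightarrow> 's option pmf) \<Rightarrow> nat \<Rightarrow> real" where
  "P_drop phi u K = real_of_ereal (INF x0\<in>states K. long_run_drop phi u x0)"

definition assumption_A :: "('s \<times> 'd) set \<Rightarrow> ('d \<times> 's) pmf \<Rightarrow> bool" where
  "assumption_A E phi \<longleftrightarrow> (\<exists>j' k. k \<notin> nbhd E j' \<and> pmf phi (j', k) > 0)"

end

theory Submission
  imports Defs
begin

lemma integral_bind_pmf_fin:
  fixes f :: "'b \<Rightarrow> real"
  assumes fin: "finite (set_pmf (bind_pmf M N))"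
  shows "(\<integral>y. f y \<partial>bind_pmf M N) = (\<integral>x. \<integral>y. f y \<partial>N x \<partial>M)"
proof -
  define S where "S = set_pmf (bind_pmf M N)"
  define g where "g y = (if y \<in> S then f y else 0)" for y
  define B where "B = (\<Sum>y\<in>S. \<bar>f y\<bar>)"
  have gb: "\<bar>g y\<bar> \<le> B" for y
    unfolding g_def B_def S_def using fin
    by (auto intro: member_le_sum[where f="\<lambda>y. \<bar>f y\<bar>"])
  have "(\<integral>y. f y \<partial>bind_pmf M N) = (\<integral>y. g y \<partial>bind_pmf M N)"
    by (intro integral_cong_AE) (auto simp: g_def S_def intro!: AE_pmfI)
  also have "\<dots> = (\<integral>x. \<integral>y. g y \<partial>N x \<partial>M)"
    unfolding measure_pmf_bind
    by (rule integral_bind[where K="count_space UNIV" and B=B and B'=1])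
       (auto simp: gb measure_pmf.emeasure_space_1 measure_pmf_in_subprob_algebra intro: measure_pmf.finite_measure)
  also have "\<dots> = (\<integral>x. \<integral>y. f y \<partial>N x \<partial>M)"
    by (intro integral_cong_AE AE_pmfI refl) (auto simp: g_def S_def intro!: AE_pmfI)
  finally show ?thesis .
qed

locale PD =
  fixes E :: "('s::finite \<times> 'd::finite) set"
    and phi :: "('d \<times> 's) pmf"
    and u :: "'d \<Rightarrow> 's \<Rightarrow> nat \<Rightarrow> 's option pmf"
    and j0 :: 'd and k0 :: 's
  assumes pol: "state_indep_policy E u"
    and k0nb: "k0 \<notin> nbhd E j0"
    and ppos: "pmf phi (j0, k0) > 0"
begin

definition inc :: "('s \<Rightarrow> nat) \<Rightarrow> 'd \<times> 's \<times> 's option \<Rightarrow> real" where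
  "inc x c = (case snd (snd c) of None \<Rightarrow> 0
     | Some i \<Rightarrow> if x i \<noteq> 0 \<and> i \<noteq> k0 \<and> fst (snd c) = k0 then 1 else 0)"
definition dec :: "('s \<Rightarrow> nat) \<Rightarrow> 'd \<times> 's \<times> 's option \<Rightarrow> real" where
  "dec x c = (case snd (snd c) of None \<Rightarrow> 0
     | Some i \<Rightarrow> if i = k0 \<and> x k0 \<noteq> 0 \<and> fst (snd c) \<noteq> k0 then 1 else 0)"
definition al :: "'d \<times> 's \<times> 's option \<Rightarrow> real" where
  "al c = (case snd (snd c) of None \<Rightarrow> 0
     | Some i \<Rightarrow> if i \<noteq> k0 \<and> fst (snd c) = k0 then 1 else 0)"
definition be :: "'d \<times> 's \<times> 's option \<Rightarrow> real" where
  "be c = (case snd (snd c) of None \<Rightarrow> 0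
     | Some i \<Rightarrow> if i = k0 \<and> fst (snd c) \<noteq> k0 then 1 else 0)"
definition uu :: "('s \<Rightarrow> nat) \<Rightarrow> 'd \<times> 's \<times> 's option \<Rightarrow> real" where
  "uu x c = (case snd (snd c) of None \<Rightarrow> 0
     | Some i \<Rightarrow> if x i = 0 \<and> i \<noteq> k0 \<and> fst (snd c) = k0 then 1 else 0)"
definition ww :: "('s \<Rightarrow> nat) \<Rightarrow> 'd \<times> 's \<times> 's option \<Rightarrow> real" where
  "ww x c = (case snd (snd c) of None \<Rightarrow> 0
     | Some i \<Rightarrow> if i = k0 \<and> x k0 = 0 \<and> fst (snd c) \<noteq> k0 then 1 else 0)"
definition dr :: "('s \<Rightarrow> nat) \<Rightarrow> 'd \<times> 's \<times> 's option \<Rightarrow> real" where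
  "dr x c = (if dropped x c then 1 else 0)"
definition qf :: "'d \<times> 's \<times> 's option \<Rightarrow> real" where
  "qf c = (if fst (snd c) = k0 then 1 else 0)"

lemma next_k0: "real (next_state x c k0) = real (x k0) + inc x c - dec x c"
  by (cases c) (auto simp: next_state_def dropped_def inc_def dec_def split: option.splits)

lemma next_k0_sq: "(real (next_state x c k0))\<^sup>2 = (real (x k0))\<^sup>2 + 2 * real (x k0) * (inc x c - dec x c) + inc x c + dec x c"
  unfolding next_k0
  by (cases c) (auto simp: inc_def dec_def power2_eq_square algebra_simps split: option.splits)

lemma inc_eq: "inc x c = al c - uu x c"
  by (auto simp: inc_def al_def uu_def split: option.splits)
lemma dec_eq: "dec x c = be c - ww x c"
  by (auto simp: dec_def be_def ww_def split: option.splits)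
lemma uu_ww_dr: "uu x c + ww x c \<le> dr x c"
  by (cases c) (auto simp: uu_def ww_def dr_def dropped_def split: option.splits)
lemma nonneg: "0 \<le> inc x c" "0 \<le> dec x c" "0 \<le> uu x c" "0 \<le> ww x c" "0 \<le> dr x c"
  "dr x c \<le> 1"
  by (auto simp: inc_def dec_def uu_def ww_def dr_def split: option.splits)
lemma inc_qf: "inc x c \<le> qf c" and dec_qf: "dec x c \<le> 1 - qf c"
  by (auto simp: inc_def dec_def qf_def split: option.splits)

lemma next_sum:
  fixes x :: "'s \<Rightarrow> nat" and c :: "'d \<times> 's \<times> 's option"
  shows "(\<Sum>i\<in>UNIV. next_state x c i) = (\<Sum>i\<in>UNIV. x i)"
proof (cases "dropped x c")
  case True then show ?thesis by (simp add: next_state_def)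
next
  case False
  obtain j k s where c: "c = (j, k, s)" by (cases c)
  with False obtain i where s: "s = Some i" and xi: "x i \<noteq> 0"
    by (auto simp: dropped_def split: option.splits)
  have ns: "next_state x c = (\<lambda>l. x l - (if l = i then 1 else 0) + (if l = k then 1 else 0))"
    using False c s by (simp add: next_state_def)
  have pt: "next_state x c l + (if l = i then 1 else 0) = x l + (if l = k then 1 else 0)" for l
    unfolding ns using xi by auto
  have "(\<Sum>l\<in>UNIV. next_state x c l + (if l = i then 1 else 0))
      = (\<Sum>l\<in>UNIV. x l + (if l = k then 1 else 0))"
    using pt by simp
  moreover have "(\<Sum>l\<in>(UNIV::'s set). if l = i then 1 else 0::nat) = 1"
    by (simp add: sum.delta)
  moreover have "(\<Sum>l\<in>(UNIV::'s set). if l = k then 1 else 0::nat) = 1"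
    by (simp add: sum.delta)
  ultimately show ?thesis by (simp only: sum.distrib)
qed

end

context PD begin

abbreviation S where "S t \<equiv> slot_pmf phi u t"

lemma fin_slot[simp]: "finite (set_pmf (S t))" by simp

lemma int_slot[simp]: "integrable (measure_pmf (S t)) (f :: _ \<Rightarrow> real)"
  by (rule integrable_measure_pmf_finite) simp

lemma int_slot_eq:
  fixes f :: "'d \<times> 's \<times> 's option \<Rightarrow> real"
  shows "(\<integral>c. f c \<partial>S t) = (\<integral>jk. (\<integral>i. f (fst jk, snd jk, i) \<partial>u (fst jk) (snd jk) t) \<partial>phi)"
  unfolding slot_pmf_def
  apply (subst integral_bind_pmf_fin)
   apply (metis fin_slot slot_pmf_def)
  apply (rule Bochner_Integration.integral_cong[OF refl])
  apply (simp split: prod.splits)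
  done

definition Q where "Q = (\<integral>jk. (if snd jk = k0 then 1 else 0::real) \<partial>phi)"

lemma slot_qf: "(\<integral>c. qf c \<partial>S t) = Q"
  unfolding int_slot_eq Q_def qf_def by simp

lemma slot_p: "(\<integral>c. inc x c + dr x c \<partial>S t) \<ge> pmf phi (j0, k0)"
proof -
  define h where "h jk = (\<integral>i. inc x (fst jk, snd jk, i) + dr x (fst jk, snd jk, i) \<partial>u (fst jk) (snd jk) t)" for jk
  have hnn: "h jk \<ge> 0" for jk
    unfolding h_def by (intro Bochner_Integration.integral_nonneg) (auto intro: add_nonneg_nonneg nonneg)
  have "h (j0, k0) = (\<integral>i. 1 \<partial>u j0 k0 t)"
    unfolding h_def fst_conv snd_conv
  proof (intro integral_cong_AE AE_pmfI, simp_all)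
    fix i assume i: "i \<in> set_pmf (u j0 k0 t)"
    then have "i \<in> insert None (Some ` nbhd E j0)" using pol unfolding state_indep_policy_def by blast
    then show "inc x (j0, k0, i) + dr x (j0, k0, i) = 1"
      using k0nb by (auto simp: inc_def dr_def dropped_def split: option.splits)
  qed
  then have h1: "h (j0, k0) = 1" by simp
  have "(\<integral>c. inc x c + dr x c \<partial>S t) = (\<integral>jk. h jk \<partial>phi)"
    unfolding int_slot_eq h_def by simp
  also have "\<dots> = (\<Sum>jk\<in>UNIV. h jk * pmf phi jk)"
    by (rule integral_measure_pmf_real) auto
  also have "\<dots> \<ge> h (j0, k0) * pmf phi (j0, k0)"
    by (rule member_le_sum) (auto intro: mult_nonneg_nonneg hnn)
  finally show ?thesis using h1 by simp
qed

end

context PD begin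

abbreviation rho where "rho x0 m \<equiv> state_dist phi u x0 m"

lemma fin_rho[simp]: "finite (set_pmf (rho x0 m))"
  by (induction m) auto

lemma int_rho[simp]: "integrable (measure_pmf (rho x0 m)) (f :: _ \<Rightarrow> real)"
  by (rule integrable_measure_pmf_finite) simp

lemma sum_rho: "x \<in> set_pmf (rho x0 m) \<Longrightarrow> (\<Sum>i\<in>UNIV. x i) = (\<Sum>i\<in>UNIV. x0 i)"
  by (induction m arbitrary: x) (auto simp: next_sum)

lemma Y_le: "x \<in> set_pmf (rho x0 m) \<Longrightarrow> real (x k0) \<le> real (\<Sum>i\<in>UNIV. x0 i)"
proof -
  assume "x \<in> set_pmf (rho x0 m)"
  then have "x k0 \<le> (\<Sum>i\<in>UNIV. x0 i)"
    using sum_rho[of x x0 m] member_le_sum[of k0 UNIV x] by simp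
  then show ?thesis by (metis of_nat_le_iff)
qed

lemma step_int:
  fixes f :: "('s \<Rightarrow> nat) \<Rightarrow> real"
  shows "(\<integral>y. f y \<partial>rho x0 (Suc m)) = (\<integral>x. (\<integral>c. f (next_state x c) \<partial>S (Suc m)) \<partial>rho x0 m)"
proof -
  have "(\<integral>y. f y \<partial>rho x0 (Suc m)) = (\<integral>x. (\<integral>y. f y \<partial>map_pmf (next_state x) (S (Suc m))) \<partial>rho x0 m)"
    unfolding state_dist.simps by (rule integral_bind_pmf_fin) (metis fin_rho state_dist.simps(2))
  then show ?thesis by simp
qed

lemma drop_eq: "drop_prob phi u x0 (Suc m) = (\<integral>x. (\<integral>c. dr x c \<partial>S (Suc m)) \<partial>rho x0 m)"
proof -
  have "drop_prob phi u x0 (Suc m) = (\<integral>b. indicator {True} b \<partial>bind_pmf (rho x0 m) (\<lambda>x. map_pmf (dropped x) (S (Suc m))))"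
    unfolding drop_prob_def by (subst Bochner_Integration.integral_indicator) (auto simp: measure_pmf.emeasure_eq_measure)
  also have "\<dots> = (\<integral>x. (\<integral>b. indicator {True} b \<partial>map_pmf (dropped x) (S (Suc m))) \<partial>rho x0 m)"
    by (rule integral_bind_pmf_fin) simp
  also have "\<dots> = (\<integral>x. (\<integral>c. dr x c \<partial>S (Suc m)) \<partial>rho x0 m)"
    by (simp add: dr_def indicator_def of_bool_def)
  finally show ?thesis .
qed

end

context PD begin

definition "mu x0 m = (\<integral>x. real (x k0) \<partial>rho x0 m)"
definition "nu x0 m = (\<integral>x. (real (x k0))\<^sup>2 \<partial>rho x0 m)"
definition "aa t x = (\<integral>c. inc x c \<partial>S t)"
definition "bb t x = (\<integral>c. dec x c \<partial>S t)"
definition "dd t x = (\<integral>c. dr x c \<partial>S t)"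
definition "UU t x = (\<integral>c. uu x c \<partial>S t)"
definition "WW t x = (\<integral>c. ww x c \<partial>S t)"
definition "alp t = (\<integral>c. al c \<partial>S t)"
definition "bet t = (\<integral>c. be c \<partial>S t)"
definition "AA x0 m = (\<integral>x. aa (Suc m) x \<partial>rho x0 m)"
definition "BB x0 m = (\<integral>x. bb (Suc m) x \<partial>rho x0 m)"
definition "DD x0 m = (\<integral>x. dd (Suc m) x \<partial>rho x0 m)"
definition "WZ x0 m = (\<integral>x. real (x k0) * (aa (Suc m) x - bb (Suc m) x) \<partial>rho x0 m)"

lemma DD_eq: "DD x0 m = drop_prob phi u x0 (Suc m)"
  by (simp add: DD_def dd_def drop_eq)

lemma mu_Suc: "mu x0 (Suc m) = mu x0 m + AA x0 m - BB x0 m"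
proof -
  have "mu x0 (Suc m) = (\<integral>x. (\<integral>c. real (x k0) + inc x c - dec x c \<partial>S (Suc m)) \<partial>rho x0 m)"
    unfolding mu_def step_int next_k0 ..
  also have "\<dots> = (\<integral>x. real (x k0) + aa (Suc m) x - bb (Suc m) x \<partial>rho x0 m)"
    by (simp add: aa_def bb_def)
  also have "\<dots> = mu x0 m + AA x0 m - BB x0 m"
    by (simp add: mu_def AA_def BB_def)
  finally show ?thesis .
qed

lemma nu_Suc: "nu x0 (Suc m) = nu x0 m + 2 * WZ x0 m + AA x0 m + BB x0 m"
proof -
  have "nu x0 (Suc m) = (\<integral>x. (\<integral>c. (real (x k0))\<^sup>2 + 2 * real (x k0) * (inc x c - dec x c) + inc x c + dec x c \<partial>S (Suc m)) \<partial>rho x0 m)"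
    unfolding nu_def step_int next_k0_sq ..
  also have "\<dots> = (\<integral>x. (real (x k0))\<^sup>2 + 2 * (real (x k0) * (aa (Suc m) x - bb (Suc m) x)) + aa (Suc m) x + bb (Suc m) x \<partial>rho x0 m)"
    by (simp add: aa_def bb_def algebra_simps)
  also have "\<dots> = nu x0 m + 2 * WZ x0 m + AA x0 m + BB x0 m"
    by (simp add: nu_def WZ_def AA_def BB_def)
  finally show ?thesis .
qed

end

context PD begin

abbreviation "KK x0 \<equiv> real (\<Sum>i\<in>UNIV. x0 i)"

lemma slot_nonneg: "0 \<le> UU t x" "0 \<le> WW t x" "0 \<le> aa t x" "0 \<le> bb t x" "0 \<le> dd t x"
  "dd t x \<le> 1"
  unfolding UU_def WW_def aa_def bb_def dd_def
  using nonneg[of x] by (auto intro!: Bochner_Integration.integral_nonneg)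
    (rule order.trans[OF integral_mono[of _ _ "\<lambda>_. 1"]], auto)

lemma aa_eq: "aa t x = alp t - UU t x"
  unfolding aa_def alp_def UU_def inc_eq by simp
lemma bb_eq: "bb t x = bet t - WW t x"
  unfolding bb_def bet_def WW_def dec_eq by simp
lemma UW_dd: "UU t x + WW t x \<le> dd t x"
proof -
  have "(\<integral>c. uu x c + ww x c \<partial>S t) \<le> (\<integral>c. dr x c \<partial>S t)"
    by (rule integral_mono) (auto intro: uu_ww_dr)
  moreover have "(\<integral>c. uu x c + ww x c \<partial>S t) = UU t x + WW t x"
    unfolding UU_def WW_def by (rule Bochner_Integration.integral_add) simp_all
  ultimately show ?thesis unfolding dd_def by linarith
qed

lemma aa_Q: "aa t x \<le> Q"
  unfolding aa_def slot_qf[symmetric, of t] by (auto intro!: integral_mono inc_qf)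
lemma bb_Q: "bb t x \<le> 1 - Q"
proof -
  have "bb t x \<le> (\<integral>c. 1 - qf c \<partial>S t)"
    unfolding bb_def by (rule integral_mono) (auto intro: dec_qf)
  moreover have "(\<integral>c. 1 - qf c \<partial>S t) = 1 - Q"
    by (subst Bochner_Integration.integral_diff) (auto simp: slot_qf)
  ultimately show ?thesis by linarith
qed
lemma aa_p: "aa t x + dd t x \<ge> pmf phi (j0, k0)"
  using slot_p[where x=x and t=t] unfolding aa_def dd_def by simp

lemma Y_AE: "AE x in rho x0 m. real (x k0) \<le> KK x0"
  by (rule AE_pmfI) (rule Y_le)

lemma mu_bounds: "0 \<le> mu x0 m" "mu x0 m \<le> KK x0"
proof -
  show "0 \<le> mu x0 m" unfolding mu_def by (auto intro!: Bochner_Integration.integral_nonneg)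
  have "mu x0 m \<le> (\<integral>x. KK x0 \<partial>rho x0 m)"
    unfolding mu_def by (rule integral_mono_AE, simp, simp, rule Y_AE)
  then show "mu x0 m \<le> KK x0" by simp
qed

lemma nu_bound: "nu x0 m \<le> (KK x0)\<^sup>2"
proof -
  have "AE x in rho x0 m. (real (x k0))\<^sup>2 \<le> (KK x0)\<^sup>2"
    using Y_AE by eventually_elim (auto intro: power_mono)
  then have "nu x0 m \<le> (\<integral>x. (KK x0)\<^sup>2 \<partial>rho x0 m)"
    unfolding nu_def by (intro integral_mono_AE) auto
  then show ?thesis by simp
qed

lemma mu0: "mu x0 0 = real (x0 k0)" and nu0: "nu x0 0 = (real (x0 k0))\<^sup>2"
  by (auto simp: mu_def nu_def)

lemma AB_bounds: "0 \<le> BB x0 m" "AA x0 m \<le> Q" "BB x0 m \<le> 1 - Q" "AA x0 m \<ge> pmf phi (j0, k0) - DD x0 m"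
  "0 \<le> DD x0 m" "DD x0 m \<le> 1" "0 \<le> AA x0 m"
proof -
  show "0 \<le> BB x0 m" "0 \<le> DD x0 m" "0 \<le> AA x0 m" unfolding BB_def DD_def AA_def
    by (auto intro!: Bochner_Integration.integral_nonneg slot_nonneg)
  show "AA x0 m \<le> Q" unfolding AA_def
    by (rule order.trans[OF integral_mono[of _ _ "\<lambda>_. Q"]]) (auto intro: aa_Q)
  show "BB x0 m \<le> 1 - Q" unfolding BB_def
    by (rule order.trans[OF integral_mono[of _ _ "\<lambda>_. 1 - Q"]]) (auto intro: bb_Q)
  show "DD x0 m \<le> 1" unfolding DD_def
    by (rule order.trans[OF integral_mono[of _ _ "\<lambda>_. 1"]]) (auto intro: slot_nonneg)
  have "(\<integral>x. pmf phi (j0, k0) \<partial>rho x0 m) \<le> (\<integral>x. aa (Suc m) x + dd (Suc m) x \<partial>rho x0 m)"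
    by (rule integral_mono) (auto intro: aa_p)
  then show "AA x0 m \<ge> pmf phi (j0, k0) - DD x0 m" by (simp add: AA_def DD_def)
qed

end

context PD begin

lemma WZ_bound: "\<bar>WZ x0 m - mu x0 m * (AA x0 m - BB x0 m)\<bar> \<le> KK x0 * DD x0 m"
proof -
  define t where "t = Suc m"
  define IU where "IU = (\<integral>x. UU t x \<partial>rho x0 m)"
  define IW where "IW = (\<integral>x. WW t x \<partial>rho x0 m)"
  define YU where "YU = (\<integral>x. real (x k0) * UU t x \<partial>rho x0 m)"
  define YW where "YW = (\<integral>x. real (x k0) * WW t x \<partial>rho x0 m)"
  have pw: "real (x k0) * (aa t x - bb t x) = (alp t - bet t) * real (x k0) - real (x k0) * UU t x + real (x k0) * WW t x" for x
    by (simp add: aa_eq bb_eq algebra_simps)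
  have WZ: "WZ x0 m = (alp t - bet t) * mu x0 m - YU + YW"
    unfolding WZ_def t_def[symmetric] pw YU_def YW_def mu_def by simp
  have AB: "AA x0 m - BB x0 m = (alp t - bet t) - IU + IW"
    unfolding AA_def BB_def t_def[symmetric] aa_eq bb_eq IU_def IW_def by simp
  have IUW: "IU + IW \<le> DD x0 m"
  proof -
    have "(\<integral>x. UU t x + WW t x \<partial>rho x0 m) \<le> DD x0 m"
      unfolding DD_def t_def[symmetric] by (rule integral_mono) (auto intro: UW_dd)
    then show ?thesis unfolding IU_def IW_def by simp
  qed
  have IU0: "0 \<le> IU" and IW0: "0 \<le> IW" unfolding IU_def IW_def
    by (auto intro!: Bochner_Integration.integral_nonneg slot_nonneg)
  have YU0: "0 \<le> YU" and YW0: "0 \<le> YW" unfolding YU_def YW_def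
    by (auto intro!: Bochner_Integration.integral_nonneg slot_nonneg mult_nonneg_nonneg)
  have YUK: "YU \<le> KK x0 * IU"
  proof -
    have "AE x in rho x0 m. real (x k0) * UU t x \<le> KK x0 * UU t x"
      using Y_AE[of x0 m] by eventually_elim (auto intro: mult_right_mono slot_nonneg simp del: of_nat_sum)
    then have "YU \<le> (\<integral>x. KK x0 * UU t x \<partial>rho x0 m)"
      unfolding YU_def by (intro integral_mono_AE) auto
    then show ?thesis unfolding IU_def by simp
  qed
  have YWK: "YW \<le> KK x0 * IW"
  proof -
    have "AE x in rho x0 m. real (x k0) * WW t x \<le> KK x0 * WW t x"
      using Y_AE[of x0 m] by eventually_elim (auto intro: mult_right_mono slot_nonneg simp del: of_nat_sum)
    then have "YW \<le> (\<integral>x. KK x0 * WW t x \<partial>rho x0 m)"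
      unfolding YW_def by (intro integral_mono_AE) auto
    then show ?thesis unfolding IW_def by simp
  qed
  have m1: "0 \<le> mu x0 m * IU" "mu x0 m * IU \<le> KK x0 * IU"
    using mu_bounds[of x0 m] IU0 by (auto intro: mult_right_mono simp del: of_nat_sum)
  have m2: "0 \<le> mu x0 m * IW" "mu x0 m * IW \<le> KK x0 * IW"
    using mu_bounds[of x0 m] IW0 by (auto intro: mult_right_mono simp del: of_nat_sum)
  have K0: "0 \<le> KK x0" by (simp only: of_nat_0_le_iff)
  have "KK x0 * (IU + IW) \<le> KK x0 * DD x0 m"
    using IUW K0 by (rule mult_left_mono)
  moreover have "WZ x0 m - mu x0 m * (AA x0 m - BB x0 m) = - (YU - mu x0 m * IU) + (YW - mu x0 m * IW)"
    unfolding WZ AB by (simp add: algebra_simps)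
  ultimately show ?thesis
    using YU0 YW0 YUK YWK m1 m2 by (simp add: abs_le_iff algebra_simps del: of_nat_sum)
qed

end

lemma arith_a:
  fixes A B Q :: real
  assumes "0 \<le> B" "A \<le> Q" "B \<le> 1 - Q" "0 \<le> A"
  shows "A + B - (A - B)\<^sup>2 \<ge> A * min (1 - Q) A"
proof (cases "A \<ge> B")
  case True
  have sq: "(A - B)\<^sup>2 \<le> (A - B) * (A + B)"
    unfolding power2_eq_square using True assms by (intro mult_left_mono) auto
  have "A * min (1 - Q) A \<le> A * (1 - (A - B))"
    using assms True by (intro mult_left_mono) auto
  also have "\<dots> \<le> (A + B) * (1 - (A - B))"
    using assms True by (intro mult_right_mono) auto
  finally show ?thesis using sq by (simp add: algebra_simps)
next
  case False
  have sq: "(A - B)\<^sup>2 \<le> (B - A) * (A + B)"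
    unfolding power2_eq_square using False assms by (simp add: mult_left_mono algebra_simps)
  have "A * min (1 - Q) A \<le> A * (1 - (B - A))"
    using assms False by (intro mult_left_mono) auto
  also have "\<dots> \<le> (A + B) * (1 - (B - A))"
    using assms False by (intro mult_right_mono) auto
  finally show ?thesis using sq by (simp add: algebra_simps)
qed

lemma arith_b:
  fixes A Q p D :: real
  assumes "A \<ge> p - D" "0 \<le> A" "0 \<le> D" "0 < p" "p \<le> 1" "Q \<le> 1"
  shows "A * min (1 - Q) A \<ge> p * min (1 - Q) p - 2 * D"
proof -
  define m where "m = min (1 - Q) p"
  have m: "0 \<le> m" "m \<le> p" "m \<le> 1 - Q" using assms by (auto simp: m_def)
  have L0: "0 \<le> A * min (1 - Q) A" using assms by auto
  have pm: "p * m \<le> m" using m assms by (simp add: mult_left_le_one_le)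
  show ?thesis
  proof (cases "D \<ge> m")
    case True then show ?thesis using L0 pm assms(3) unfolding m_def[symmetric] by linarith
  next
    case False
    have "min (1 - Q) A \<ge> m - D" using m assms by (auto simp: m_def)
    have "(p - D) * (m - D) \<le> A * min (1 - Q) A"
      apply (rule mult_mono) using assms False \<open>min (1 - Q) A \<ge> m - D\<close> by auto
    moreover have "(p - D) * (m - D) \<ge> p * m - 2 * D"
    proof -
      have "(p - D) * (m - D) = p * m - D * (p + m) + D * D" by (simp add: algebra_simps)
      moreover have "D * (p + m) \<le> D * 2" using assms m by (intro mult_left_mono) auto
      moreover have "D * D \<ge> 0" by simp
      ultimately show ?thesis by linarith
    qed
    ultimately show ?thesis unfolding m_def by linarith
  qed
qed

lemma lin_aux:
  fixes dV X v y z :: real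
  shows "dV = 2 * X + v \<Longrightarrow> - y \<le> X \<Longrightarrow> y = K * D \<Longrightarrow> v \<le> dV + 2 * K * D"
  by auto

context PD begin

definition "VV x0 m = nu x0 m - (mu x0 m)\<^sup>2"
definition "pp = pmf phi (j0, k0)"
definition "cc = (if Q < 1 then pp * min (1 - Q) pp else pp)"

lemma pp: "0 < pp" "pp \<le> 1" using ppos by (auto simp: pp_def pmf_le_1)
lemma Q_le: "Q \<le> 1" using AB_bounds(1,3)[of x0 0] by linarith
lemma cc_pos: "0 < cc"
  using pp Q_le by (auto simp: cc_def)

lemma v_step: "AA x0 m + BB x0 m - (AA x0 m - BB x0 m)\<^sup>2 \<le> VV x0 (Suc m) - VV x0 m + 2 * KK x0 * DD x0 m"
proof -
  have "VV x0 (Suc m) - VV x0 m = 2 * (WZ x0 m - mu x0 m * (AA x0 m - BB x0 m)) + (AA x0 m + BB x0 m - (AA x0 m - BB x0 m)\<^sup>2)"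
    unfolding VV_def nu_Suc mu_Suc by (simp add: power2_eq_square algebra_simps)
  moreover have "WZ x0 m - mu x0 m * (AA x0 m - BB x0 m) \<ge> - (KK x0 * DD x0 m)"
    using WZ_bound[of x0 m] by (simp only: abs_le_iff) linarith
  moreover have "KK x0 * DD x0 m = KK x0 * DD x0 m" ..
  ultimately show ?thesis by (rule lin_aux)
qed

lemma key:
  "real T * cc - (KK x0)\<^sup>2 \<le> (2 * KK x0 + 2) * (\<Sum>m<T. DD x0 m)"
proof -
  define K where "K = KK x0"
  define SS where "SS = (\<Sum>m<T. DD x0 m)"
  have K0: "0 \<le> K" unfolding K_def by (simp only: of_nat_0_le_iff)
  have KK: "K \<le> K\<^sup>2"
  proof (cases "(\<Sum>i\<in>UNIV. x0 i) = 0")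
    case True then show ?thesis unfolding K_def by simp
  next
    case False
    then have "1 \<le> (\<Sum>i\<in>UNIV. x0 i)" by linarith
    then have "1 \<le> K" unfolding K_def by (metis of_nat_1 of_nat_le_iff)
    then show ?thesis by (simp add: power2_eq_square)
  qed
  have SS0: "0 \<le> SS" unfolding SS_def by (intro sum_nonneg) (simp add: AB_bounds)
  show ?thesis
  proof (cases "Q < 1")
    case True
    have "(\<Sum>m<T. AA x0 m + BB x0 m - (AA x0 m - BB x0 m)\<^sup>2) \<le> (\<Sum>m<T. VV x0 (Suc m) - VV x0 m + 2 * K * DD x0 m)"
      unfolding K_def by (intro sum_mono v_step)
    also have "\<dots> = VV x0 T - VV x0 0 + 2 * K * SS"
      unfolding SS_def by (simp add: sum.distrib sum_lessThan_telescope sum_distrib_left)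
    also have "\<dots> \<le> K\<^sup>2 + 2 * K * SS"
    proof -
      have "VV x0 0 = 0" by (simp add: VV_def mu0 nu0)
      moreover have "VV x0 T \<le> K\<^sup>2" unfolding VV_def K_def using nu_bound[of x0 T] zero_le_power2[of "mu x0 T"] by linarith
      ultimately show ?thesis by simp
    qed
    finally have up: "(\<Sum>m<T. AA x0 m + BB x0 m - (AA x0 m - BB x0 m)\<^sup>2) \<le> K\<^sup>2 + 2 * K * SS" .
    have "(\<Sum>m<T. pp * min (1 - Q) pp - 2 * DD x0 m) \<le> (\<Sum>m<T. AA x0 m + BB x0 m - (AA x0 m - BB x0 m)\<^sup>2)"
    proof (intro sum_mono)
      fix m
      have "A' * min (1 - Q) A' \<le> AA x0 m + BB x0 m - (AA x0 m - BB x0 m)\<^sup>2" if "A' = AA x0 m" for A'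
        unfolding that by (rule arith_a) (simp_all add: AB_bounds)
      moreover have "AA x0 m * min (1 - Q) (AA x0 m) \<ge> pp * min (1 - Q) pp - 2 * DD x0 m"
        by (rule arith_b) (use AB_bounds[of x0 m] pp Q_le in \<open>simp_all add: pp_def\<close>)
      ultimately show "pp * min (1 - Q) pp - 2 * DD x0 m \<le> AA x0 m + BB x0 m - (AA x0 m - BB x0 m)\<^sup>2"
        by fastforce
    qed
    then have "real T * cc - 2 * SS \<le> K\<^sup>2 + 2 * K * SS"
      using up True unfolding SS_def cc_def by (simp add: sum_subtractf sum_distrib_left[symmetric])
    then show ?thesis unfolding K_def[symmetric] SS_def[symmetric] by (simp add: algebra_simps)
  next
    case False
    then have Q1: "Q = 1" using Q_le by simp
    have B0: "BB x0 m = 0" for m using AB_bounds(1,3)[of x0 m] Q1 by simp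
    have "(\<Sum>m<T. AA x0 m - BB x0 m) = mu x0 T - mu x0 0"
      by (simp add: mu_Suc sum_lessThan_telescope[of "mu x0", symmetric])
    also have "\<dots> \<le> K" using mu_bounds[of x0 T] mu_bounds[of x0 0] unfolding K_def by simp
    finally have "(\<Sum>m<T. AA x0 m) \<le> K" using B0 by simp
    moreover have "(\<Sum>m<T. pp - DD x0 m) \<le> (\<Sum>m<T. AA x0 m)"
      by (intro sum_mono) (use AB_bounds(4) in \<open>simp add: pp_def\<close>)
    ultimately have "real T * pp - SS \<le> K" unfolding SS_def by (simp add: sum_subtractf)
    then have main: "real T * pp - K \<le> SS" by simp
    have "real T * pp - K\<^sup>2 \<le> (2 * K + 2) * SS"
    proof (cases "real T * pp - K \<ge> 0")
      case True
      have "0 \<le> (2 * K + 1) * (real T * pp - K)"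
        using True K0 by (intro mult_nonneg_nonneg) auto
      then have "real T * pp - K \<le> (2 * K + 2) * (real T * pp - K)"
        by (simp add: algebra_simps)
      also have "\<dots> \<le> (2 * K + 2) * SS" using main K0 by (intro mult_left_mono) auto
      finally show ?thesis using KK by linarith
    next
      case False
      have "0 \<le> (2 * K + 2) * SS" using K0 SS0 by simp
      then show ?thesis using False KK by linarith
    qed
    then show ?thesis using False unfolding cc_def K_def SS_def by simp
  qed
qed

end

context PD begin

lemma drop_sum: "(\<Sum>t=1..T. drop_prob phi u x0 t) = (\<Sum>m<T. DD x0 m)"
  by (induction T) (auto simp: DD_eq)

lemma drop_le1: "(\<Sum>t=1..T. drop_prob phi u x0 t) \<le> real T"
proof -
  have "(\<Sum>m<T. DD x0 m) \<le> (\<Sum>m<T. 1)" by (intro sum_mono) (simp add: AB_bounds)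
  then show ?thesis unfolding drop_sum by simp
qed

lemma lrd_upper: "long_run_drop phi u x0 \<le> 1"
proof -
  have "long_run_drop phi u x0 \<le> Liminf sequentially (\<lambda>T. (1::ereal))"
    unfolding long_run_drop_def
  proof (intro Liminf_mono eventually_sequentiallyI[of 1])
    fix T :: nat assume "1 \<le> T"
    then show "ereal ((\<Sum>t=1..T. drop_prob phi u x0 t) / real T) \<le> 1"
      using drop_le1[of x0 T] by (simp add: divide_le_eq)
  qed
  then show ?thesis by (simp add: Liminf_const)
qed

lemma lrd_lower: "ereal (cc / (2 * KK x0 + 2)) \<le> long_run_drop phi u x0"
proof -
  define K where "K = KK x0"
  have K0: "0 \<le> K" unfolding K_def by (simp only: of_nat_0_le_iff)
  define g where "g T = cc / (2 * K + 2) - (K\<^sup>2 / (2 * K + 2)) * inverse (real T)" for T :: nat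
  have "(\<lambda>T. g T) \<longlonglongrightarrow> cc / (2 * K + 2) - (K\<^sup>2 / (2 * K + 2)) * 0"
    unfolding g_def by (intro tendsto_intros lim_inverse_n)
  then have lim: "(\<lambda>T. ereal (g T)) \<longlonglongrightarrow> ereal (cc / (2 * K + 2))"
    by (intro tendsto_ereal) simp
  have "ereal (cc / (2 * K + 2)) = Liminf sequentially (\<lambda>T. ereal (g T))"
    using lim by (intro lim_imp_Liminf[symmetric]) auto
  also have "\<dots> \<le> long_run_drop phi u x0"
    unfolding long_run_drop_def
  proof (intro Liminf_mono eventually_sequentiallyI[of 1])
    fix T :: nat assume T: "1 \<le> T"
    have key': "real T * cc - K\<^sup>2 \<le> (2 * K + 2) * (\<Sum>t=1..T. drop_prob phi u x0 t)"
      using key[of T x0] unfolding drop_sum K_def .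
    have pos: "0 < (2 * K + 2) * real T" using K0 T by simp
    have e1: "(real T * cc - K\<^sup>2) / ((2 * K + 2) * real T) = real T * cc / ((2 * K + 2) * real T) - K\<^sup>2 / ((2 * K + 2) * real T)"
      by (rule diff_divide_distrib)
    have e2: "real T * cc / ((2 * K + 2) * real T) = cc / (2 * K + 2)" using T by simp
    have e3: "K\<^sup>2 / ((2 * K + 2) * real T) = (K\<^sup>2 / (2 * K + 2)) * inverse (real T)"
      by (simp add: divide_inverse)
    have "g T = (real T * cc - K\<^sup>2) / ((2 * K + 2) * real T)"
      unfolding g_def e1 e2 e3 ..
    also have "\<dots> \<le> ((2 * K + 2) * (\<Sum>t=1..T. drop_prob phi u x0 t)) / ((2 * K + 2) * real T)"
      using pos key' by (intro divide_right_mono) auto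
    also have "\<dots> = (\<Sum>t=1..T. drop_prob phi u x0 t) / real T"
      using K0 by simp
    finally show "ereal (g T) \<le> ereal ((\<Sum>t=1..T. drop_prob phi u x0 t) / real T)" by simp
  qed
  finally show ?thesis unfolding K_def .
qed

end

theorem proposition2:
  fixes E :: "('s::finite \<times> 'd::finite) set"
    and phi :: "('d \<times> 's) pmf"
    and u :: "'d \<Rightarrow> 's \<Rightarrow> nat \<Rightarrow> 's option pmf"
  assumes "assumption_A E phi"
    and "state_indep_policy E u"
  shows "(\<lambda>K. P_drop phi u K) \<in> \<Omega>(\<lambda>K. 1 / (real K)^2)
       \<and> (- Liminf sequentially (\<lambda>K. ereal (ln (P_drop phi u K) / real K)) = 0)"
proof -
  from assms(1) obtain j0 k0 where jk: "k0 \<notin> nbhd E j0" "pmf phi (j0, k0) > 0"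
    unfolding assumption_A_def by blast
  interpret PD E phi u j0 k0 using assms(2) jk by unfold_locales auto
  have bounds: "cc / (2 * real K + 2) \<le> P_drop phi u K \<and> P_drop phi u K \<le> 1" for K
  proof -
    define z :: "'s \<Rightarrow> nat" where "z = (\<lambda>i. if i = k0 then K else 0)"
    have ne: "z \<in> states K" unfolding states_def z_def by (simp add: sum.delta')
    have "ereal (cc / (2 * real K + 2)) \<le> (INF x0\<in>states K. long_run_drop phi u x0)"
    proof (rule INF_greatest)
      fix x0 :: "'s \<Rightarrow> nat" assume "x0 \<in> states K"
      then have "KK x0 = real K" by (simp add: states_def)
      then show "ereal (cc / (2 * real K + 2)) \<le> long_run_drop phi u x0"
        using lrd_lower[of x0] by simp
    qed
    moreover have "(INF x0\<in>states K. long_run_drop phi u x0) \<le> 1"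
      by (rule INF_lower2[OF ne lrd_upper])
    ultimately show ?thesis
      unfolding P_drop_def
      by (cases "(INF x0\<in>states K. long_run_drop phi u x0)") auto
  qed
  have cc: "0 < cc" by (rule cc_pos)
  have low: "cc / 4 * (1 / (real K)\<^sup>2) \<le> P_drop phi u K" if K: "1 \<le> K" for K
  proof -
    have "cc / 4 * (1 / (real K)\<^sup>2) \<le> cc / (4 * real K)"
      using K cc by (simp add: field_simps power2_eq_square)
    also have "\<dots> \<le> cc / (2 * real K + 2)"
      using K cc by (intro divide_left_mono) auto
    also have "\<dots> \<le> P_drop phi u K" using bounds by blast
    finally show ?thesis .
  qed
  have omega: "(\<lambda>K. P_drop phi u K) \<in> \<Omega>(\<lambda>K. 1 / (real K)^2)"
  proof (rule landau_omega.bigI[of "cc / 4"])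
    show "0 < cc / 4" using cc by simp
    show "\<forall>\<^sub>F K in sequentially. norm (P_drop phi u K) \<ge> cc / 4 * norm (1 / (real K)^2)"
    proof (intro eventually_sequentiallyI[of 1])
      fix K :: nat assume K: "1 \<le> K"
      have "0 \<le> cc / 4 * (1 / (real K)\<^sup>2)" using cc by simp
      then have "0 \<le> P_drop phi u K" using low[OF K] by linarith
      then show "norm (P_drop phi u K) \<ge> cc / 4 * norm (1 / (real K)^2)" using low[OF K] by simp
    qed
  qed
  have lim1: "(\<lambda>K::nat. ln (cc / (4 * real K)) / real K) \<longlonglongrightarrow> 0"
  proof -
    have a: "(\<lambda>K::nat. ln (real K) / real K) \<longlonglongrightarrow> 0"
      using filterlim_compose[OF ln_x_over_x_tendsto_0 filterlim_real_sequentially] by simp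
    have b: "(\<lambda>K::nat. ln (cc / 4) * inverse (real K)) \<longlonglongrightarrow> 0"
      by (intro tendsto_mult_right_zero lim_inverse_n)
    have c: "(\<lambda>K::nat. ln (cc / 4) * inverse (real K) - ln (real K) / real K) \<longlonglongrightarrow> 0 - 0"
      by (intro tendsto_diff a b)
    have "\<forall>\<^sub>F K in sequentially. ln (cc / 4) * inverse (real K) - ln (real K) / real K = ln (cc / (4 * real K)) / real K"
    proof (intro eventually_sequentiallyI[of 1])
      fix K :: nat assume K: "1 \<le> K"
      have "ln (cc / (4 * real K)) = ln (cc / 4) - ln (real K)"
        using K cc by (simp add: ln_div ln_mult)
      then show "ln (cc / 4) * inverse (real K) - ln (real K) / real K = ln (cc / (4 * real K)) / real K"
        by (simp only: diff_divide_distrib divide_inverse left_diff_distrib)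
    qed
    from Lim_transform_eventually[OF c this] show ?thesis by simp
  qed
  have lim: "(\<lambda>K. ln (P_drop phi u K) / real K) \<longlonglongrightarrow> 0"
  proof (rule tendsto_sandwich[OF _ _ lim1 tendsto_const])
    show "\<forall>\<^sub>F K in sequentially. ln (cc / (4 * real K)) / real K \<le> ln (P_drop phi u K) / real K"
    proof (intro eventually_sequentiallyI[of 1])
      fix K :: nat assume K: "1 \<le> K"
      have "cc / (4 * real K) \<le> cc / (2 * real K + 2)"
        using K cc by (intro divide_left_mono) auto
      also have "\<dots> \<le> P_drop phi u K" using bounds by blast
      finally have le: "cc / (4 * real K) \<le> P_drop phi u K" .
      have pos: "0 < cc / (4 * real K)" using K cc by simp
      have "ln (cc / (4 * real K)) \<le> ln (P_drop phi u K)"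
        using le pos by (subst ln_le_cancel_iff) auto
      then show "ln (cc / (4 * real K)) / real K \<le> ln (P_drop phi u K) / real K"
        using K by (intro divide_right_mono) auto
    qed
    show "\<forall>\<^sub>F K in sequentially. ln (P_drop phi u K) / real K \<le> 0"
    proof (intro eventually_sequentiallyI[of 1])
      fix K :: nat assume K: "1 \<le> K"
      have "0 < cc / 4 * (1 / (real K)\<^sup>2)" using cc K by simp
      then have "0 < P_drop phi u K" using low[OF K] by linarith
      then have "ln (P_drop phi u K) \<le> 0" using bounds[of K] by simp
      then show "ln (P_drop phi u K) / real K \<le> 0" by (simp add: divide_nonpos_nonneg)
    qed
  qed
  have "Liminf sequentially (\<lambda>K. ereal (ln (P_drop phi u K) / real K)) = 0"
    using lim by (intro lim_imp_Liminf) (auto intro: tendsto_ereal simp: zero_ereal_def)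
  with omega show ?thesis by simp
qed


end
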